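(* Let $p$ be an odd prime and $a,b\in\mathbb Z_p$ with $ab(a^2-b^2)\not\equiv0\pmod p$. Then $$\sum_{k=0}^{[p/4]}\binom{4k}{2k}\Big(\frac{a^2-b^2}{16a^2}\Big)^k\equiv\frac1{2b}\Big(\frac{2a}p\Big)\Big\{(a+b)\Big(\frac{a+b}p\Big)-(a-b)\Big(\frac{a-b}p\Big)\Big\}\pmod p$$ and $$\sum_{k=0}^{[p/4]}\binom{4k}{2k}\Big(\frac{a^2}{16(a^2-b^2)}\Big)^k\equiv\begin{cases}\frac1{2b}\big\{(a+b)\big(\frac{a-b}p\big)-(a-b)\big(\frac{a+b}p\big)\big\}(b^2-a^2)^{\frac{p-1}4}\pmod p&\text{if }4\mid p-1,\\ \frac1{2b}\big\{\big(\frac{a+b}p\big)-\big(\frac{a-b}p\big)\big\}(b^2-a^2)^{\frac{p+1}4}\pmod p&\text{if }4\mid p-3.\end{cases}$$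
   Context: $[x]$ is the greatest integer $\le x$; $\mathbb Z_p$ is the set of rational numbers whose denominator is not divisible by $p$; $(\frac{\cdot}{p})$ is the Legendre symbol (extended to $\mathbb Z_p$ via residues). *)

theory Defs
  imports Complex_Main "HOL-Number_Theory.Number_Theory"
begin

definition in_Zp :: "nat \<Rightarrow> rat \<Rightarrow> bool" where
  "in_Zp p x \<longleftrightarrow> \<not> int p dvd snd (quotient_of x)"

definition qcong :: "nat \<Rightarrow> rat \<Rightarrow> rat \<Rightarrow> bool" where
  "qcong p x y \<longleftrightarrow> (\<exists>z. in_Zp p z \<and> x - y = of_nat p * z)"

definition qLegendre :: "rat \<Rightarrow> nat \<Rightarrow> int" where
  "qLegendre x p = Legendre (SOME r :: int. qcong p (of_int r) x) (int p)"

end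

theory Submission
  imports Defs "HOL-Computational_Algebra.Polynomial"
begin

lemma in_Zp_iff:
  assumes p: "prime p"
  shows "in_Zp p x \<longleftrightarrow> (\<exists>r s. \<not> int p dvd s \<and> x = of_int r / of_int s)"
proof
  assume "in_Zp p x"
  then show "\<exists>r s. \<not> int p dvd s \<and> x = of_int r / of_int s"
    unfolding in_Zp_def by (metis prod.collapse quotient_of_div)
next
  assume "\<exists>r s. \<not> int p dvd s \<and> x = of_int r / of_int s"
  then obtain r s where s: "\<not> int p dvd s" and x: "x = of_int r / of_int s" by blast
  obtain n d where nd: "quotient_of x = (n, d)" by (cases "quotient_of x")
  have d0: "d > 0" using nd quotient_of_denom_pos by blast
  have cop: "coprime n d" using nd quotient_of_coprime by blast
  have xnd: "x = of_int n / of_int d" using nd quotient_of_div by blast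
  have s0: "s \<noteq> 0" using s by auto
  have "of_int n / of_int d = (of_int r / of_int s :: rat)" using x xnd by simp
  then have "of_int (n * s) = (of_int (r * d) :: rat)" using s0 d0
    by (simp add: field_simps)
  then have eq: "n * s = r * d" by linarith
  have "d dvd n * s" using eq by simp
  then have "d dvd s" using cop by (metis coprime_commute coprime_dvd_mult_right_iff)
  then have "\<not> int p dvd d" using s dvd_trans by blast
  then show "in_Zp p x" unfolding in_Zp_def using nd by simp
qed

lemma in_Zp_intI:
  assumes "prime p" shows "in_Zp p (of_int k)"
proof -
  have "\<not> int p dvd 1" using prime_gt_1_nat[OF assms] by simp
  then have "\<exists>r s. \<not> int p dvd s \<and> (of_int k :: rat) = of_int r / of_int s"
    by (intro exI[of _ k] exI[of _ 1]) simp
  then show ?thesis using in_Zp_iff[OF assms] by blast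
qed

lemma in_Zp_natI: "prime p \<Longrightarrow> in_Zp p (of_nat k)"
  using in_Zp_intI[of p "int k"] by simp

lemma in_Zp_0: "prime p \<Longrightarrow> in_Zp p 0" using in_Zp_intI[of p 0] by simp
lemma in_Zp_1: "prime p \<Longrightarrow> in_Zp p 1" using in_Zp_intI[of p 1] by simp
lemma in_Zp_numeral: "prime p \<Longrightarrow> in_Zp p (numeral k)" using in_Zp_intI[of p "numeral k"] by simp

lemma in_Zp_add:
  assumes p: "prime p" and "in_Zp p x" "in_Zp p y" shows "in_Zp p (x + y)"
proof -
  obtain r s where s: "\<not> int p dvd s" "x = of_int r / of_int s" using assms in_Zp_iff by blast
  obtain r' s' where s': "\<not> int p dvd s'" "y = of_int r' / of_int s'" using assms in_Zp_iff by blast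
  have "\<not> int p dvd s * s'" using s s' p by (simp add: prime_dvd_mult_iff)
  moreover have "s \<noteq> 0" "s' \<noteq> 0" using s s' by auto
  moreover have "x + y = of_int (r * s' + r' * s) / of_int (s * s')"
    using s s' calculation by (auto simp: field_simps)
  ultimately show ?thesis using p in_Zp_iff by blast
qed

lemma in_Zp_mult:
  assumes p: "prime p" and "in_Zp p x" "in_Zp p y" shows "in_Zp p (x * y)"
proof -
  obtain r s where s: "\<not> int p dvd s" "x = of_int r / of_int s" using assms in_Zp_iff by blast
  obtain r' s' where s': "\<not> int p dvd s'" "y = of_int r' / of_int s'" using assms in_Zp_iff by blast
  have "\<not> int p dvd s * s'" using s s' p by (simp add: prime_dvd_mult_iff)
  moreover have "x * y = of_int (r * r') / of_int (s * s')"
    using s s' by (auto simp: field_simps)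
  ultimately show ?thesis using p in_Zp_iff by blast
qed

lemma in_Zp_uminus:
  assumes p: "prime p" and "in_Zp p x" shows "in_Zp p (- x)"
  using in_Zp_mult[OF p in_Zp_intI[OF p, of "-1"] assms(2)] by simp

lemma in_Zp_diff:
  assumes p: "prime p" and "in_Zp p x" "in_Zp p y" shows "in_Zp p (x - y)"
  using in_Zp_add[OF p assms(2) in_Zp_uminus[OF p assms(3)]] by simp

lemma in_Zp_power:
  assumes p: "prime p" and "in_Zp p x" shows "in_Zp p (x ^ k)"
  by (induction k) (auto simp: in_Zp_1[OF p] in_Zp_mult[OF p] assms)

lemma in_Zp_sum:
  assumes p: "prime p" and "\<And>i. i \<in> A \<Longrightarrow> in_Zp p (f i)" shows "in_Zp p (sum f A)"
  using assms(2) by (induction A rule: infinite_finite_induct) (auto simp: in_Zp_0[OF p] in_Zp_add[OF p])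

lemma qcong_int_iff:
  assumes p: "prime p"
  shows "qcong p (of_int u) (of_int v) \<longleftrightarrow> [u = v] (mod int p)"
proof
  assume "qcong p (of_int u) (of_int v)"
  then obtain z where z: "in_Zp p z" "of_int u - of_int v = of_nat p * z" unfolding qcong_def by blast
  obtain r s where s: "\<not> int p dvd s" "z = of_int r / of_int s" using z p in_Zp_iff by blast
  have s0: "s \<noteq> 0" using s by auto
  have "of_int ((u - v) * s) = (of_int (int p * r) :: rat)" using z s s0 by (simp add: field_simps)
  then have "(u - v) * s = int p * r" by linarith
  then have "int p dvd (u - v) * s" by simp
  then have "int p dvd (u - v)" using s p by (simp add: prime_dvd_mult_iff)
  then show "[u = v] (mod int p)" by (simp add: cong_iff_dvd_diff)
next
  assume "[u = v] (mod int p)"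
  then obtain k where "u - v = int p * k" by (auto simp: cong_iff_dvd_diff dvd_def)
  then have "of_int u - of_int v = of_nat p * (of_int k :: rat)"
    by (metis of_int_diff of_int_mult of_int_of_nat_eq)
  then show "qcong p (of_int u) (of_int v)" unfolding qcong_def using in_Zp_intI[OF p] by blast
qed

lemma qcong_refl: "prime p \<Longrightarrow> qcong p x x"
  unfolding qcong_def using in_Zp_0 by fastforce

lemma qcong_eqI: "prime p \<Longrightarrow> x = y \<Longrightarrow> qcong p x y"
  using qcong_refl by blast

lemma qcong_sym: assumes p: "prime p" and "qcong p x y" shows "qcong p y x"
proof -
  obtain z where "in_Zp p z" "x - y = of_nat p * z" using assms unfolding qcong_def by blast
  then show ?thesis unfolding qcong_def
    by (intro exI[of _ "-z"]) (auto simp: in_Zp_uminus[OF p] algebra_simps)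
qed

lemma qcong_trans: assumes p: "prime p" and "qcong p x y" "qcong p y w" shows "qcong p x w"
proof -
  obtain z where "in_Zp p z" "x - y = of_nat p * z" using assms unfolding qcong_def by blast
  moreover obtain z' where "in_Zp p z'" "y - w = of_nat p * z'" using assms unfolding qcong_def by blast
  ultimately show ?thesis unfolding qcong_def
    by (intro exI[of _ "z + z'"]) (auto simp: in_Zp_add[OF p] algebra_simps)
qed

lemma qcong_add: assumes p: "prime p" and "qcong p x y" "qcong p x' y'" shows "qcong p (x + x') (y + y')"
proof -
  obtain z where "in_Zp p z" "x - y = of_nat p * z" using assms unfolding qcong_def by blast
  moreover obtain z' where "in_Zp p z'" "x' - y' = of_nat p * z'" using assms unfolding qcong_def by blast
  ultimately show ?thesis unfolding qcong_def
    by (intro exI[of _ "z + z'"]) (auto simp: in_Zp_add[OF p] algebra_simps)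
qed

lemma qcong_diff: assumes p: "prime p" and "qcong p x y" "qcong p x' y'" shows "qcong p (x - x') (y - y')"
proof -
  obtain z where "in_Zp p z" "x - y = of_nat p * z" using assms unfolding qcong_def by blast
  moreover obtain z' where "in_Zp p z'" "x' - y' = of_nat p * z'" using assms unfolding qcong_def by blast
  ultimately show ?thesis unfolding qcong_def
    by (intro exI[of _ "z - z'"]) (auto simp: in_Zp_diff[OF p] algebra_simps)
qed

lemma qcong_mult:
  assumes p: "prime p" and "qcong p x y" "qcong p x' y'" "in_Zp p x" "in_Zp p y'"
  shows "qcong p (x * x') (y * y')"
proof -
  obtain z where z: "in_Zp p z" "x - y = of_nat p * z" using assms unfolding qcong_def by blast
  obtain z' where z': "in_Zp p z'" "x' - y' = of_nat p * z'" using assms unfolding qcong_def by blast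
  have "x * x' - y * y' = x * (x' - y') + (x - y) * y'" by (simp add: algebra_simps)
  also have "\<dots> = of_nat p * (x * z' + z * y')" using z z' by (simp add: algebra_simps)
  finally show ?thesis unfolding qcong_def
    using z z' assms by (intro exI[of _ "x * z' + z * y'"]) (auto simp: in_Zp_add[OF p] in_Zp_mult[OF p])
qed

lemma qcong_in_Zp: assumes p: "prime p" and "qcong p x y" "in_Zp p y" shows "in_Zp p x"
proof -
  obtain z where z: "in_Zp p z" "x - y = of_nat p * z" using assms unfolding qcong_def by blast
  have "x = y + of_nat p * z" using z by simp
  moreover have "in_Zp p (y + of_nat p * z)"
    using z assms in_Zp_natI[OF p, of p] by (intro in_Zp_add[OF p] in_Zp_mult[OF p]) auto
  ultimately show ?thesis by simp
qed

lemma qcong_power: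
  assumes p: "prime p" and "qcong p x y" "in_Zp p y" shows "qcong p (x ^ k) (y ^ k)"
proof (induction k)
  case 0 then show ?case using qcong_refl[OF p] by simp
next
  case (Suc k)
  have "in_Zp p x" using qcong_in_Zp[OF p] assms by blast
  then show ?case using qcong_mult[OF p assms(2) Suc] by (simp add: in_Zp_power[OF p] assms)
qed

lemma qcong_sum:
  assumes p: "prime p" and "\<And>i. i \<in> A \<Longrightarrow> qcong p (f i) (g i)"
  shows "qcong p (sum f A) (sum g A)"
  using assms(2) by (induction A rule: infinite_finite_induct) (auto simp: qcong_refl[OF p] qcong_add[OF p])

lemma in_Zp_rep:
  assumes p: "prime p" and x: "in_Zp p x" shows "\<exists>r. qcong p x (of_int r)"
proof -
  obtain r s where s: "\<not> int p dvd s" "x = of_int r / of_int s" using assms in_Zp_iff by blast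
  have pi: "prime (int p)" using p by simp
  have "coprime s (int p)" using s(1) pi by (metis coprime_commute prime_imp_coprime)
  then obtain s' where s': "[s * s' = 1] (mod int p)" using cong_solve_coprime_int by blast
  then obtain k where k: "1 - s * s' = int p * k"
    by (metis cong_iff_dvd_diff cong_sym dvdE)
  have s0: "s \<noteq> 0" using s by auto
  have "x - of_int (r * s') = of_nat p * (of_int (r * k) / of_int s)"
  proof -
    have "x - of_int (r * s') = of_int r * of_int (1 - s * s') / of_int s" using s s0 by (simp add: field_simps)
    also have "\<dots> = of_nat p * (of_int (r * k) / of_int s)" using k by simp
    finally show ?thesis .
  qed
  moreover have "in_Zp p (of_int (r * k) / of_int s)" using in_Zp_iff[OF p] s by blast
  ultimately show ?thesis unfolding qcong_def by blast
qed

definition zunit :: "nat \<Rightarrow> rat \<Rightarrow> bool" where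
  "zunit p x \<longleftrightarrow> in_Zp p x \<and> \<not> qcong p x 0"

lemma zunit_rep:
  assumes p: "prime p" and "qcong p x (of_int r)"
  shows "qcong p x 0 \<longleftrightarrow> [r = 0] (mod int p)"
proof
  assume "qcong p x 0"
  then have "qcong p (of_int r) (of_int 0)" using qcong_trans[OF p qcong_sym[OF p assms(2)]] by simp
  then show "[r = 0] (mod int p)" using qcong_int_iff[OF p] by blast
next
  assume "[r = 0] (mod int p)"
  then have "qcong p (of_int r) (of_int 0)" using qcong_int_iff[OF p] by blast
  then show "qcong p x 0" using qcong_trans[OF p assms(2)] by simp
qed

lemma zunit_intI: "prime p \<Longrightarrow> \<not> int p dvd k \<Longrightarrow> zunit p (of_int k)"
  unfolding zunit_def using zunit_rep[of p "of_int k" k] qcong_refl[of p] in_Zp_intI[of p k]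
  by (auto simp: cong_0_iff)

lemma in_Zp_inverse:
  assumes p: "prime p" and u: "zunit p x" shows "in_Zp p (inverse x)"
proof -
  obtain r s where s: "\<not> int p dvd s" "x = of_int r / of_int s" using u p in_Zp_iff zunit_def by blast
  have s0: "s \<noteq> 0" using s by auto
  have r: "\<not> int p dvd r"
  proof
    assume "int p dvd r"
    then obtain k where k: "r = int p * k" by blast
    have "x - 0 = of_nat p * (of_int k / of_int s)" using s k by simp
    moreover have "in_Zp p (of_int k / of_int s)" using in_Zp_iff[OF p] s by blast
    ultimately have "qcong p x 0" unfolding qcong_def by blast
    then show False using u zunit_def by blast
  qed
  then have "r \<noteq> 0" by auto
  then have "inverse x = of_int s / of_int r" using s by simp
  then show ?thesis using in_Zp_iff[OF p] r by blast
qed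

lemma in_Zp_divide:
  assumes p: "prime p" and "in_Zp p y" "zunit p x" shows "in_Zp p (y / x)"
  using in_Zp_mult[OF p assms(2) in_Zp_inverse[OF p assms(3)]] by (simp add: divide_inverse)

lemma zunit_mult:
  assumes p: "prime p" and "zunit p x" "zunit p y" shows "zunit p (x * y)"
proof -
  obtain r where r: "qcong p x (of_int r)" using in_Zp_rep[OF p] assms zunit_def by blast
  obtain s where s: "qcong p y (of_int s)" using in_Zp_rep[OF p] assms zunit_def by blast
  have xy: "qcong p (x * y) (of_int (r * s))"
    using qcong_mult[OF p r s] assms in_Zp_intI[OF p] zunit_def by auto
  have "\<not> [r = 0] (mod int p)" "\<not> [s = 0] (mod int p)"
    using zunit_rep[OF p r] zunit_rep[OF p s] assms zunit_def by auto
  then have "\<not> [r * s = 0] (mod int p)" using p by (simp add: cong_0_iff prime_dvd_mult_iff)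
  then show ?thesis unfolding zunit_def using zunit_rep[OF p xy] assms zunit_def in_Zp_mult[OF p] by auto
qed

lemma zunit_1: "prime p \<Longrightarrow> zunit p 1"
  using zunit_intI[of p 1] prime_gt_1_nat[of p] by simp

lemma zunit_power:
  assumes p: "prime p" and "zunit p x" shows "zunit p (x ^ k)"
  by (induction k) (auto simp: zunit_1[OF p] zunit_mult[OF p] assms)


lemma zunit_inverse:
  assumes p: "prime p" and u: "zunit p x" shows "zunit p (inverse x)"
proof -
  have x0: "x \<noteq> 0" using u qcong_refl[OF p] zunit_def by auto
  have "\<not> qcong p (inverse x) 0"
  proof
    assume "qcong p (inverse x) 0"
    then have "qcong p (x * inverse x) (x * 0)"
      using qcong_mult[OF p qcong_refl[OF p]] u zunit_def in_Zp_0[OF p] by blast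
    then have "qcong p 1 0" using x0 by simp
    then have "[(1::int) = 0] (mod int p)" using qcong_int_iff[OF p, of 1 0] by simp
    then show False using prime_gt_1_nat[OF p] by (auto simp: cong_0_iff)
  qed
  then show ?thesis using in_Zp_inverse[OF p u] zunit_def by blast
qed

lemma zunit_divide:
  assumes p: "prime p" and "zunit p x" "zunit p y" shows "zunit p (x / y)"
  using zunit_mult[OF p assms(2) zunit_inverse[OF p assms(3)]] by (simp add: divide_inverse)

lemma zunit_nonzero: "prime p \<Longrightarrow> zunit p x \<Longrightarrow> x \<noteq> 0"
  using qcong_refl zunit_def by auto

lemma qcong_cancel:
  assumes p: "prime p" and c: "zunit p c" and "in_Zp p y" and h: "qcong p (c * x) (c * y)"
  shows "qcong p x y"
proof -
  have "qcong p (inverse c * (c * x)) (inverse c * (c * y))"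
    using qcong_mult[OF p qcong_refl[OF p] h] in_Zp_inverse[OF p c] in_Zp_mult[OF p] c assms zunit_def by auto
  then show ?thesis using zunit_nonzero[OF p c] by (simp add: field_simps)
qed

lemma qcong_euler:
  assumes p: "prime p" and p2: "2 < p" and x: "in_Zp p x"
  shows "qcong p (of_int (qLegendre x p)) (x ^ ((p - 1) div 2))"
proof -
  have ex: "\<exists>r. qcong p (of_int r) x" using in_Zp_rep[OF p x] qcong_sym[OF p] by blast
  define r0 where "r0 = (SOME r :: int. qcong p (of_int r) x)"
  have r0: "qcong p (of_int r0) x" unfolding r0_def using someI_ex[OF ex] .
  have "[Legendre r0 (int p) = r0 ^ ((p - 1) div 2)] (mod int p)" using euler_criterion[OF p p2] by simp
  then have "qcong p (of_int (Legendre r0 (int p))) (of_int (r0 ^ ((p - 1) div 2)))"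
    using qcong_int_iff[OF p] by blast
  moreover have "qcong p ((of_int r0) ^ ((p - 1) div 2)) (x ^ ((p - 1) div 2))"
    using qcong_power[OF p r0 x] .
  ultimately show ?thesis unfolding qLegendre_def r0_def[symmetric]
    using qcong_trans[OF p] by simp
qed

lemma qLegendre_unit:
  assumes p: "prime p" and u: "zunit p x"
  shows "qLegendre x p = 1 \<or> qLegendre x p = -1"
proof -
  have ex: "\<exists>r. qcong p (of_int r) x" using in_Zp_rep[OF p] u zunit_def qcong_sym[OF p] by blast
  define r0 where "r0 = (SOME r :: int. qcong p (of_int r) x)"
  have r0: "qcong p (of_int r0) x" unfolding r0_def using someI_ex[OF ex] .
  have "\<not> [r0 = 0] (mod int p)" using zunit_rep[OF p qcong_sym[OF p r0]] u zunit_def by blast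
  then show ?thesis unfolding qLegendre_def r0_def[symmetric] Legendre_def by auto
qed

lemma qcong_fermat:
  assumes p: "prime p" and p2: "2 < p" and u: "zunit p x"
  shows "qcong p (x ^ (p - 1)) 1"
proof -
  have x: "in_Zp p x" using u zunit_def by blast
  have e: "qcong p (x ^ ((p - 1) div 2)) (of_int (qLegendre x p))"
    using qcong_sym[OF p qcong_euler[OF p p2 x]] .
  have "odd p" using p p2 prime_odd_nat by blast
  then have pe: "p - 1 = 2 * ((p - 1) div 2)" by auto
  have "qcong p ((x ^ ((p - 1) div 2)) ^ 2) ((of_int (qLegendre x p)) ^ 2)"
    using qcong_power[OF p e] in_Zp_intI[OF p] by blast
  moreover have "(of_int (qLegendre x p) :: rat) ^ 2 = 1" using qLegendre_unit[OF p u] by auto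
  moreover have "(x ^ ((p - 1) div 2)) ^ 2 = x ^ (p - 1)" by (subst pe) (simp add: power_mult[symmetric] mult.commute)
  ultimately show ?thesis by simp
qed

lemma choose_step: "Suc k * (N choose Suc k) = (N - k) * (N choose k)"
  using binomial_absorption[of k N] binomial_absorb_comp[of N k] by simp

lemma central_step: "(j + 1) * ((2*j+2) choose (j+1)) = 2 * (2*j+1) * ((2*j) choose j)"
proof -
  have a: "Suc j * ((Suc (Suc (2*j))) choose Suc j) = Suc (Suc (2*j)) * ((Suc (2*j)) choose j)"
    by (rule Suc_times_binomial)
  have b: "Suc j * ((Suc (2*j)) choose Suc j) = Suc (2*j) * ((2*j) choose j)"
    by (rule Suc_times_binomial)
  have c: "(Suc (2*j)) choose Suc j = (Suc (2*j)) choose j"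
    using binomial_symmetric[of "Suc j" "Suc (2*j)"] by simp
  have bc: "Suc j * ((Suc (2*j)) choose j) = Suc (2*j) * ((2*j) choose j)" using b unfolding c .
  have "Suc j * (Suc j * ((Suc (Suc (2*j))) choose Suc j)) = Suc (Suc (2*j)) * (Suc j * ((Suc (2*j)) choose j))"
    using a by (simp only: mult.assoc mult.commute mult.left_commute)
  also have "\<dots> = Suc (Suc (2*j)) * (Suc (2*j) * ((2*j) choose j))" by (simp only: bc)
  also have "\<dots> = Suc j * (2 * (Suc (2*j)) * ((2*j) choose j))" by simp
  finally have "Suc j * ((Suc (Suc (2*j))) choose Suc j) = 2 * (Suc (2*j)) * ((2*j) choose j)"
    by (subst (asm) mult_left_cancel) simp_all
  moreover have "2*j+2 = Suc (Suc (2*j))" "j + 1 = Suc j" "2*j+1 = Suc (2*j)" by simp_all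
  ultimately show ?thesis by simp
qed

lemma central_cong:
  assumes p: "prime p" and odd: "odd p" and j: "j \<le> (p - 1) div 2"
  shows "[int ((2*j) choose j) = int (((p - 1) div 2) choose j) * (-4) ^ j] (mod int p)"
  using j
proof (induction j)
  case 0 then show ?case by simp
next
  case (Suc j)
  define n where "n = (p - 1) div 2"
  have pn: "p = 2 * n + 1" using odd n_def by presburger
  have jn: "j < n" using Suc n_def by simp
  have IH: "[int ((2*j) choose j) = int (n choose j) * (-4) ^ j] (mod int p)"
    using Suc n_def by simp
  have e0: "(j + 1) * ((2*(j+1)) choose (j+1)) = 2 * (2*j+1) * ((2*j) choose j)"
    using central_step[of j] by (simp add: algebra_simps)
  have e1: "int (j + 1) * int ((2*(j+1)) choose (j+1)) = 2 * (2 * int j + 1) * int ((2*j) choose j)"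
    using arg_cong[OF e0, of int] by (simp only: of_nat_mult of_nat_add of_nat_1 of_nat_numeral)
  have e2: "int (j + 1) * (int (n choose (j+1)) * (-4) ^ (j+1)) = (2 * (2 * int j + 1) - 2 * int p) * (int (n choose j) * (-4) ^ j)"
  proof -
    have A: "int (j + 1) * int (n choose (j+1)) = int (n - j) * int (n choose j)"
      using choose_step[of j n] by (metis Suc_eq_plus1 of_nat_mult)
    have B: "int (n - j) * (-4) = 2 * (2 * int j + 1) - 2 * int p" using jn pn by simp
    have "int (j+1) * (int (n choose (j+1)) * (-4) ^ (j+1)) = (int (j + 1) * int (n choose (j+1))) * ((-4) * (-4)^j)"
      by (simp only: power_Suc Suc_eq_plus1[symmetric] mult.assoc)
    also have "\<dots> = (int (n - j) * int (n choose j)) * ((-4) * (-4)^j)" by (simp only: A)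
    also have "\<dots> = (int (n - j) * (-4)) * (int (n choose j) * (-4)^j)" by (simp only: mult.assoc mult.commute mult.left_commute)
    also have "\<dots> = (2 * (2 * int j + 1) - 2 * int p) * (int (n choose j) * (-4)^j)" by (simp only: B)
    finally show ?thesis .
  qed
  have "[(2 * (2 * int j + 1) - 2 * int p) * (int (n choose j) * (-4) ^ j) = 2 * (2 * int j + 1) * (int (n choose j) * (-4) ^ j)] (mod int p)"
    by (simp add: cong_iff_dvd_diff algebra_simps)
  moreover have "[2 * (2 * int j + 1) * (int (n choose j) * (-4) ^ j) = 2 * (2 * int j + 1) * int ((2*j) choose j)] (mod int p)"
    using IH by (simp add: cong_mult cong_sym)
  ultimately have "[int (j + 1) * (int (n choose (j+1)) * (-4) ^ (j+1)) = int (j + 1) * int ((2*(j+1)) choose (j+1))] (mod int p)"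
    unfolding e1 e2 by (rule cong_trans)
  moreover have "coprime (int (j + 1)) (int p)"
  proof -
    have "\<not> p dvd (j + 1)" using jn pn by (auto dest: dvd_imp_le)
    then have "coprime p (j + 1)" by (rule prime_imp_coprime[OF p])
    then have "coprime (j + 1) p" by (simp add: coprime_commute)
    then show ?thesis by (subst coprime_int_iff)
  qed
  ultimately have "[int (n choose (j+1)) * (-4) ^ (j+1) = int ((2*(j+1)) choose (j+1))] (mod int p)"
    using cong_mult_lcancel by blast
  then have "[int ((2*(j+1)) choose (j+1)) = int (n choose (j+1)) * (-4) ^ (j+1)] (mod int p)"
    by (rule cong_sym)
  then show ?case unfolding n_def by simp
qed

lemma binom4_cong:
  assumes p: "prime p" and odd: "odd p" and k: "2 * k \<le> (p - 1) div 2"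
  shows "qcong p (of_nat ((4*k) choose (2*k))) (of_nat (((p - 1) div 2) choose (2*k)) * 16 ^ k)"
proof -
  have "[int ((2*(2*k)) choose (2*k)) = int (((p - 1) div 2) choose (2*k)) * (-4) ^ (2*k)] (mod int p)"
    using central_cong[OF p odd k] .
  moreover have "((-4)::int) ^ (2*k) = 16 ^ k" by (simp add: power_mult)
  ultimately have "[int ((4*k) choose (2*k)) = int (((p - 1) div 2) choose (2*k)) * 16 ^ k] (mod int p)"
    by (simp add: mult.assoc)
  then have "qcong p (of_int (int ((4*k) choose (2*k)))) (of_int (int (((p - 1) div 2) choose (2*k)) * 16 ^ k))"
    using qcong_int_iff[OF p] by blast
  then show ?thesis by simp
qed

definition pm :: "nat \<Rightarrow> rat poly \<Rightarrow> bool" where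
  "pm p Q \<longleftrightarrow> (\<forall>j. \<exists>c::int. coeff Q j = of_nat p * of_int c)"

lemma pm_add: "pm p A \<Longrightarrow> pm p B \<Longrightarrow> pm p (A + B)"
  unfolding pm_def by (metis coeff_add distrib_left of_int_add)

lemma pm_diff: "pm p A \<Longrightarrow> pm p B \<Longrightarrow> pm p (A - B)"
  unfolding pm_def by (metis coeff_diff right_diff_distrib of_int_diff)

lemma pm_smult: "pm p A \<Longrightarrow> pm p (smult (of_int a) A)"
  unfolding pm_def by (metis coeff_smult mult.left_commute of_int_mult)

lemma pm_shift: "pm p A \<Longrightarrow> pm p (pCons 0 A)"
  unfolding pm_def
proof
  fix j assume h: "\<forall>j. \<exists>c::int. coeff A j = of_nat p * of_int c"
  show "\<exists>c::int. coeff (pCons 0 A) j = of_nat p * of_int c"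
  proof (cases j)
    case 0 then show ?thesis by (intro exI[of _ 0]) simp
  next
    case (Suc i) then show ?thesis using h by simp
  qed
qed

lemma pm_lin: "pm p A \<Longrightarrow> pm p ([:of_int a, of_int b:] * A)"
proof -
  assume h: "pm p A"
  have "[:of_int a, of_int b:] * A = smult (of_int a) A + pCons 0 (smult (of_int b) A)"
    by (simp add: mult_pCons_left)
  then show ?thesis using h pm_add pm_shift pm_smult by metis
qed

lemma coeff_lin_pow:
  "coeff ([:a, 1:] ^ n) i = (of_nat (n choose i) * a ^ (n - i) :: rat)"
proof (cases "i \<le> n")
  case True then show ?thesis using coeff_linear_poly_power[OF True, of a 1] by simp
next
  case False
  have "degree ([:a, 1:] ^ n) \<le> degree [:a, (1::rat):] * n" by (rule degree_power_le)
  then have "degree ([:a, 1:] ^ n) < i" using False by simp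
  then show ?thesis using False by (simp add: coeff_eq_0)
qed

lemma pm_D1:
  assumes p: "prime p" shows "pm p ([:1, 1:] ^ p - monom 1 p - 1)"
  unfolding pm_def
proof
  fix j
  have p0: "p > 0" using prime_gt_0_nat[OF p] .
  show "\<exists>c::int. coeff ([:1, 1:] ^ p - monom 1 p - 1 :: rat poly) j = of_nat p * of_int c"
  proof (cases "j = 0 \<or> j \<ge> p")
    case True
    then have "coeff ([:1, 1:] ^ p - monom 1 p - 1 :: rat poly) j = 0"
      using p0 by (auto simp: coeff_lin_pow coeff_monom)
    then show ?thesis by (intro exI[of _ 0]) simp
  next
    case False
    then have "p dvd (p choose j)" using dvd_choose_prime[of j p] p by auto
    then obtain c where c: "p choose j = p * c" by blast
    have "coeff ([:1, 1:] ^ p - monom 1 p - 1 :: rat poly) j = of_nat (p choose j)"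
      using False by (auto simp: coeff_lin_pow coeff_monom)
    also have "\<dots> = of_nat p * of_int (int c)" using c by simp
    finally show ?thesis by blast
  qed
qed

lemma pm_D2:
  assumes p: "prime p" and odd: "odd p" shows "pm p ([:-1, 1:] ^ p - monom 1 p + 1)"
  unfolding pm_def
proof
  fix j
  have p0: "p > 0" using prime_gt_0_nat[OF p] .
  show "\<exists>c::int. coeff ([:-1, 1:] ^ p - monom 1 p + 1 :: rat poly) j = of_nat p * of_int c"
  proof (cases "j = 0 \<or> j \<ge> p")
    case True
    then have "coeff ([:-1, 1:] ^ p - monom 1 p + 1 :: rat poly) j = 0"
      using p0 odd by (auto simp: coeff_lin_pow coeff_monom)
    then show ?thesis by (intro exI[of _ 0]) simp
  next
    case False
    then have "p dvd (p choose j)" using dvd_choose_prime[of j p] p by auto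
    then obtain c where c: "p choose j = p * c" by blast
    have "coeff ([:-1, 1:] ^ p - monom 1 p + 1 :: rat poly) j = of_nat (p choose j) * (-1) ^ (p - j)"
      using False by (auto simp: coeff_lin_pow coeff_monom)
    also have "\<dots> = of_nat p * of_int (int c * (-1) ^ (p - j))" using c by simp
    finally show ?thesis by blast
  qed
qed

lemma descent:
  fixes F R :: "rat poly" and e :: nat
  assumes p: "prime p" and odd: "odd p"
    and ev: "\<And>x. poly R x = 2 * x ^ e * poly F (x ^ 2)"
    and cR: "pm p R"
    and t: "in_Zp p t"
  shows "\<exists>z. in_Zp p z \<and> poly F t = of_nat p * z"
proof -
  define G where "G = (\<Sum>i\<le>degree F. monom (coeff F i) (2 * i + e))"
  have pG: "poly G x = x ^ e * poly F (x ^ 2)" for x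
  proof -
    have "poly G x = (\<Sum>i\<le>degree F. coeff F i * x ^ (2 * i + e))"
      unfolding G_def by (simp add: poly_sum poly_monom)
    also have "\<dots> = x ^ e * (\<Sum>i\<le>degree F. coeff F i * (x ^ 2) ^ i)"
    proof -
      have "x ^ (2 * i + e) = x ^ e * (x ^ 2) ^ i" for i
        by (simp add: power_add power_mult[symmetric] mult.commute)
      then show ?thesis by (simp add: sum_distrib_left mult.left_commute)
    qed
    also have "\<dots> = x ^ e * poly F (x ^ 2)" by (simp add: poly_altdef)
    finally show ?thesis .
  qed
  have "poly R = poly (smult 2 G)" using ev pG by (auto simp: fun_eq_iff)
  then have RG: "R = smult 2 G" using poly_eq_poly_eq_iff by blast
  have cG: "coeff G (2 * i + e) = coeff F i" if "i \<le> degree F" for i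
  proof -
    have "coeff G (2 * i + e) = (\<Sum>i'\<le>degree F. if i' = i then coeff F i' else 0)"
      unfolding G_def by (simp add: coeff_sum coeff_monom)
    also have "\<dots> = coeff F i" using that by simp
    finally show ?thesis .
  qed
  obtain c where c: "\<And>j. coeff R j = of_nat p * of_int (c j)"
    using cR unfolding pm_def by metis
  have cF: "coeff F i = of_nat p * (of_int (c (2 * i + e)) / 2)" if "i \<le> degree F" for i
    using c[of "2 * i + e"] cG[OF that] RG by simp
  have "poly F t = (\<Sum>i\<le>degree F. coeff F i * t ^ i)" by (simp add: poly_altdef)
  also have "\<dots> = of_nat p * (\<Sum>i\<le>degree F. (of_int (c (2 * i + e)) / 2) * t ^ i)"
    unfolding sum_distrib_left
  proof (rule sum.cong[OF refl])
    fix i assume "i \<in> {..degree F}"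
    then have "coeff F i = of_nat p * (of_int (c (2 * i + e)) / 2)" using cF by simp
    then show "coeff F i * t ^ i = of_nat p * (of_int (c (2 * i + e)) / 2 * t ^ i)"
      by (simp only: mult.assoc)
  qed
  finally have eq: "poly F t = of_nat p * (\<Sum>i\<le>degree F. (of_int (c (2 * i + e)) / 2) * t ^ i)" .
  have "\<not> int p dvd 2"
  proof
    assume "int p dvd 2" then have "p dvd 2" using int_dvd_int_iff[of p 2] by simp
    then have "p \<le> 2" using dvd_imp_le by auto
    then have "p = 2" using prime_gt_1_nat[OF p] by simp
    then show False using odd by simp
  qed
  then have "in_Zp p (of_int (c (2 * i + e)) / 2)" for i
    unfolding in_Zp_iff[OF p] by (intro exI[of _ "c (2*i+e)"] exI[of _ 2]) simp
  then have "in_Zp p (\<Sum>i\<le>degree F. (of_int (c (2 * i + e)) / 2) * t ^ i)"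
    using t by (intro in_Zp_sum[OF p] in_Zp_mult[OF p] in_Zp_power[OF p]) auto
  then show ?thesis using eq by blast
qed

lemma sum_even_odd:
  fixes M :: nat and h :: "nat \<Rightarrow> 'a::comm_monoid_add"
  shows "(\<Sum>i<2*M. h i) = (\<Sum>k<M. h (2*k)) + (\<Sum>k<M. h (2*k+1))"
proof (induction M)
  case 0 then show ?case by simp
next
  case (Suc M)
  have "2 * Suc M = Suc (Suc (2*M))" by simp
  then show ?case using Suc by (simp add: add_ac)
qed

lemma binom_split:
  fixes z w :: "'a::comm_ring_1"
  shows "(z + w)^n + (z - w)^n = 2 * (\<Sum>k\<le>n div 2. of_nat (n choose (2*k)) * w^(2*k) * z^(n - 2*k))"
    and "(z + w)^n - (z - w)^n = 2 * (\<Sum>k\<le>n div 2. of_nat (n choose (2*k+1)) * w^(2*k+1) * z^(n - (2*k+1)))"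
proof -
  define M where "M = Suc (n div 2)"
  have sub: "{..n} \<subseteq> {..<2*M}" unfolding M_def by auto
  have ext: "(\<Sum>i\<le>n. of_nat (n choose i) * v^i * z^(n-i)) = (\<Sum>i<2*M. of_nat (n choose i) * v^i * z^(n-i))"
    for v :: 'a
  proof (rule sum.mono_neutral_left)
    show "\<forall>i\<in>{..<2*M} - {..n}. of_nat (n choose i) * v^i * z^(n-i) = 0"
      by (auto simp: binomial_eq_0)
  qed (use sub in auto)
  have bp: "(z + w)^n = (\<Sum>i<2*M. of_nat (n choose i) * w^i * z^(n-i))"
    using binomial_ring[of w z n] ext[of w] by (simp add: add.commute)
  have bm: "(z - w)^n = (\<Sum>i<2*M. of_nat (n choose i) * (-w)^i * z^(n-i))"
    using binomial_ring[of "-w" z n] ext[of "-w"] by (simp add: add.commute)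
  have MM: "{..<M} = {..n div 2}" unfolding M_def by auto
  have "(z + w)^n + (z - w)^n = (\<Sum>i<2*M. of_nat (n choose i) * w^i * z^(n-i) + of_nat (n choose i) * (-w)^i * z^(n-i))"
    unfolding bp bm by (simp add: sum.distrib)
  also have "\<dots> = (\<Sum>k<M. 2 * (of_nat (n choose (2*k)) * w^(2*k) * z^(n - 2*k)))"
    by (subst sum_even_odd, subst sum.distrib[symmetric], rule sum.cong[OF refl]) simp
  finally show "(z + w)^n + (z - w)^n = 2 * (\<Sum>k\<le>n div 2. of_nat (n choose (2*k)) * w^(2*k) * z^(n - 2*k))"
    unfolding MM by (simp add: sum_distrib_left)
  have "(z + w)^n - (z - w)^n = (\<Sum>i<2*M. of_nat (n choose i) * w^i * z^(n-i) - of_nat (n choose i) * (-w)^i * z^(n-i))"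
    unfolding bp bm by (simp add: sum_subtractf)
  also have "\<dots> = (\<Sum>k<M. 2 * (of_nat (n choose (2*k+1)) * w^(2*k+1) * z^(n - (2*k+1))))"
    by (subst sum_even_odd, subst sum.distrib[symmetric], rule sum.cong[OF refl]) simp
  finally show "(z + w)^n - (z - w)^n = 2 * (\<Sum>k\<le>n div 2. of_nat (n choose (2*k+1)) * w^(2*k+1) * z^(n - (2*k+1)))"
    unfolding MM by (simp add: sum_distrib_left)
qed

definition Pe :: "nat \<Rightarrow> rat \<Rightarrow> rat" where
  "Pe n t = (\<Sum>k\<le>n div 2. of_nat (n choose (2*k)) * 4^k * t^k * (t+1)^(n-2*k))"

definition Po :: "nat \<Rightarrow> rat \<Rightarrow> rat" where
  "Po n t = (\<Sum>k\<le>n div 2. of_nat (n choose (2*k+1)) * 4^k * t^k * (t+1)^(n-(2*k+1)))"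

lemma two_pow_even: "(2*x)^(2*k) = 4^k * ((x::rat)^2)^k"
  by (simp add: power_mult power_mult_distrib)

lemma two_pow_odd: "(2*x)^(2*k+1) = 2 * x * (4^k * ((x::rat)^2)^k)"
  using two_pow_even[of x k] by (simp add: power_add algebra_simps)

lemma Pe_sq: "2 * Pe n (x^2) = (x+1)^(2*n) + (x-1)^(2*n)"
proof -
  have h1: "(x+1)^2 = (x^2+1) + 2*x" and h2: "(x-1)^2 = (x^2+1) - 2*x"
    by (simp_all add: power2_eq_square algebra_simps)
  have "(x+1)^(2*n) + (x-1)^(2*n) = ((x^2+1) + 2*x)^n + ((x^2+1) - 2*x)^n"
    unfolding power_mult h1 h2 ..
  also have "\<dots> = 2 * (\<Sum>k\<le>n div 2. of_nat (n choose (2*k)) * (2*x)^(2*k) * (x^2+1)^(n - 2*k))"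
    by (rule binom_split(1))
  also have "\<dots> = 2 * Pe n (x^2)"
    unfolding Pe_def two_pow_even by (simp add: algebra_simps)
  finally show ?thesis by simp
qed

lemma Po_sq: "4 * x * Po n (x^2) = (x+1)^(2*n) - (x-1)^(2*n)"
proof -
  have h1: "(x+1)^2 = (x^2+1) + 2*x" and h2: "(x-1)^2 = (x^2+1) - 2*x"
    by (simp_all add: power2_eq_square algebra_simps)
  have "(x+1)^(2*n) - (x-1)^(2*n) = ((x^2+1) + 2*x)^n - ((x^2+1) - 2*x)^n"
    unfolding power_mult h1 h2 ..
  also have "\<dots> = 2 * (\<Sum>k\<le>n div 2. of_nat (n choose (2*k+1)) * (2*x)^(2*k+1) * (x^2+1)^(n - (2*k+1)))"
    by (rule binom_split(2))
  also have "\<dots> = 4 * x * Po n (x^2)"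
    unfolding Po_def two_pow_odd by (simp add: sum_distrib_left algebra_simps)
  finally show ?thesis by simp
qed

lemma even_id:
  assumes p: "prime p" and odd: "odd p" and t: "in_Zp p t"
  shows "qcong p ((t - 1) * Pe ((p - 1) div 2) t) (t ^ ((p - 1) div 2 + 1) - 1)"
proof -
  define n where "n = (p - 1) div 2"
  have pn: "p = 2 * n + 1" using odd n_def by presburger
  define Pp :: "rat poly" where
    "Pp = (\<Sum>k\<le>n div 2. smult (of_nat (n choose (2*k)) * 4^k) (monom 1 k * [:1,1:]^(n-2*k)))"
  have pPp: "poly Pp x = Pe n x" for x
    unfolding Pp_def Pe_def by (simp add: poly_sum poly_monom add.commute mult_ac)
  define F where "F = [:-1,1:] * Pp - monom 1 (n+1) + 1"
  have pF: "poly F x = (x - 1) * Pe n x - x^(n+1) + 1" for x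
    by (simp add: F_def pPp poly_monom algebra_simps)
  define R :: "rat poly" where "R = [:of_int (-1), of_int 1:] * ([:1, 1:] ^ p - monom 1 p - 1)
      + [:of_int 1, of_int 1:] * ([:-1, 1:] ^ p - monom 1 p + 1)"
  have pmR: "pm p R" unfolding R_def by (intro pm_add pm_lin pm_D1[OF p] pm_D2[OF p odd])
  have ev: "poly R x = 2 * x^0 * poly F (x^2)" for x
  proof -
    have k: "2 * Pe n (x^2) = (x+1)^(2*n) + (x-1)^(2*n)" by (rule Pe_sq)
    have "poly R x = (x-1)*((x+1)^p - x^p - 1) + (x+1)*((x-1)^p - x^p + 1)"
      by (simp add: R_def poly_monom algebra_simps)
    also have "\<dots> = (x^2 - 1)*((x+1)^(2*n) + (x-1)^(2*n)) - 2*x^(2*n+2) + 2"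
      unfolding pn by (simp add: power2_eq_square power_add algebra_simps)
    also have "\<dots> = (x^2 - 1)*(2 * Pe n (x^2)) - 2*x^(2*n+2) + 2" by (simp only: k)
    also have "\<dots> = 2 * poly F (x^2)"
    proof -
      have "(x^2)^(n+1) = x^(2*n+2)" by (simp only: power_mult[symmetric]) simp
      then show ?thesis unfolding pF by (simp add: algebra_simps)
    qed
    finally show ?thesis by simp
  qed
  obtain z where z: "in_Zp p z" "poly F t = of_nat p * z"
    using descent[OF p odd ev pmR t] by blast
  show ?thesis unfolding qcong_def n_def[symmetric] using z pF[of t] by (intro exI[of _ z]) auto
qed

lemma odd_id:
  assumes p: "prime p" and odd: "odd p" and t: "in_Zp p t"
  shows "qcong p (2 * (t - 1) * Po ((p - 1) div 2) t) (1 - t ^ ((p - 1) div 2))"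
proof -
  define n where "n = (p - 1) div 2"
  have pn: "p = 2 * n + 1" using odd n_def by presburger
  define Pp :: "rat poly" where
    "Pp = (\<Sum>k\<le>n div 2. smult (of_nat (n choose (2*k+1)) * 4^k) (monom 1 k * [:1,1:]^(n-(2*k+1))))"
  have pPp: "poly Pp x = Po n x" for x
    unfolding Pp_def Po_def by (simp add: poly_sum poly_monom add.commute mult_ac)
  define F where "F = smult 2 ([:-1,1:] * Pp) + monom 1 n - 1"
  have pF: "poly F x = 2 * (x - 1) * Po n x + x^n - 1" for x
    by (simp add: F_def pPp poly_monom algebra_simps)
  define R :: "rat poly" where "R = [:of_int (-1), of_int 1:] * ([:1, 1:] ^ p - monom 1 p - 1)
      - [:of_int 1, of_int 1:] * ([:-1, 1:] ^ p - monom 1 p + 1)"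
  have pmR: "pm p R" unfolding R_def by (intro pm_diff pm_lin pm_D1[OF p] pm_D2[OF p odd])
  have ev: "poly R x = 2 * x^1 * poly F (x^2)" for x
  proof -
    have k: "4 * x * Po n (x^2) = (x+1)^(2*n) - (x-1)^(2*n)" by (rule Po_sq)
    have "poly R x = (x-1)*((x+1)^p - x^p - 1) - (x+1)*((x-1)^p - x^p + 1)"
      by (simp add: R_def poly_monom algebra_simps)
    also have "\<dots> = (x^2 - 1)*((x+1)^(2*n) - (x-1)^(2*n)) + 2*x^(2*n+1) - 2*x"
      unfolding pn by (simp add: power2_eq_square power_add algebra_simps)
    also have "\<dots> = (x^2 - 1)*(4 * x * Po n (x^2)) + 2*x^(2*n+1) - 2*x" by (simp only: k)
    also have "\<dots> = 2 * x * poly F (x^2)"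
      unfolding pF by (simp add: power_mult[symmetric] power_add algebra_simps)
    finally show ?thesis by simp
  qed
  obtain z where z: "in_Zp p z" "poly F t = of_nat p * z"
    using descent[OF p odd ev pmR t] by blast
  show ?thesis unfolding qcong_def n_def[symmetric] using z pF[of t] by (intro exI[of _ z]) (auto simp: algebra_simps)
qed

lemma zunit_factor:
  assumes p: "prime p" and x: "in_Zp p x" and y: "in_Zp p y" and u: "zunit p (x * y)"
  shows "zunit p x"
proof -
  have "\<not> qcong p x 0"
  proof
    assume "qcong p x 0"
    then have "qcong p (x * y) (0 * y)" using qcong_mult[OF p _ qcong_refl[OF p] x y] by blast
    then show False using u zunit_def by simp
  qed
  then show ?thesis using x zunit_def by blast
qed

lemma zunit_two: "prime p \<Longrightarrow> odd p \<Longrightarrow> zunit p 2"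
proof -
  assume p: "prime p" and odd: "odd p"
  have "\<not> int p dvd 2"
  proof
    assume "int p dvd 2" then have "p dvd 2" using int_dvd_int_iff[of p 2] by simp
    then have "p \<le> 2" using dvd_imp_le by auto
    then have "p = 2" using prime_gt_1_nat[OF p] by simp
    then show False using odd by simp
  qed
  then show ?thesis using zunit_intI[OF p, of 2] by simp
qed

lemma qcong_multL:
  assumes p: "prime p" and "in_Zp p c" "qcong p x y" "in_Zp p y"
  shows "qcong p (c * x) (c * y)"
  using qcong_mult[OF p qcong_refl[OF p] assms(3) assms(2) assms(4)] .

lemma binsum_cong:
  assumes p: "prime p" and odd: "odd p" and y: "in_Zp p y"
  shows "qcong p (\<Sum>k=0..p div 4. of_nat ((4*k) choose (2*k)) * y^k)
                 (\<Sum>k\<le>((p - 1) div 2) div 2. of_nat (((p - 1) div 2) choose (2*k)) * (16*y)^k)"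
proof -
  define n where "n = (p - 1) div 2"
  have pn: "p = 2 * n + 1" using odd n_def by presburger
  have d: "p div 4 = n div 2" using pn by presburger
  have "qcong p (of_nat ((4*k) choose (2*k)) * y^k) (of_nat (n choose (2*k)) * (16*y)^k)"
    if "k \<le> n div 2" for k
  proof -
    have "2 * k \<le> n" using that by simp
    then have "qcong p (of_nat ((4*k) choose (2*k))) (of_nat (n choose (2*k)) * 16 ^ k)"
      using binom4_cong[OF p odd] n_def by simp
    then have "qcong p (of_nat ((4*k) choose (2*k)) * y^k) ((of_nat (n choose (2*k)) * 16 ^ k) * y^k)"
      using qcong_mult[OF p _ qcong_refl[OF p]] in_Zp_natI[OF p] in_Zp_power[OF p y] by blast
    then show ?thesis by (simp add: power_mult_distrib mult.assoc)
  qed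
  then show ?thesis unfolding n_def[symmetric] d atLeast0AtMost by (intro qcong_sum[OF p]) auto
qed

lemma f_Pe:
  assumes "t + 1 \<noteq> 0" "u = 4 * t / (t + 1)^2"
  shows "(t + 1)^n * (\<Sum>k\<le>n div 2. of_nat (n choose (2*k)) * u^k) = Pe n t"
  unfolding Pe_def sum_distrib_left
proof (rule sum.cong[OF refl])
  fix k assume "k \<in> {..n div 2}"
  then have kn: "2 * k + (n - 2 * k) = n" by auto
  have E1: "(t + 1)^n = (t+1)^(2*k) * (t+1)^(n - 2*k)" by (subst kn[symmetric], subst power_add) simp
  have E2: "u^k * (t+1)^(2*k) = 4^k * t^k"
  proof -
    have "u * (t+1)^2 = 4 * t" using assms by (simp add: field_simps)
    then have "(u * (t+1)^2)^k = (4 * t)^k" by simp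
    then show ?thesis by (simp add: power_mult_distrib power_mult)
  qed
  have "(t + 1)^n * (of_nat (n choose (2*k)) * u^k) = of_nat (n choose (2*k)) * (u^k * (t+1)^(2*k)) * (t+1)^(n-2*k)"
    by (simp only: E1 mult_ac)
  also have "\<dots> = of_nat (n choose (2*k)) * 4^k * t^k * (t+1)^(n-2*k)" unfolding E2 by (simp only: mult.assoc)
  finally show "(t + 1)^n * (of_nat (n choose (2*k)) * u^k) = of_nat (n choose (2*k)) * 4^k * t^k * (t+1)^(n-2*k)" .
qed

lemma g_Po:
  assumes "t + 1 \<noteq> 0" "u = 4 * t / (t + 1)^2" "odd n"
  shows "(t + 1)^(n - 1) * (\<Sum>k\<le>n div 2. of_nat (n choose (2*k+1)) * u^k) = Po n t"
  unfolding Po_def sum_distrib_left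
proof (rule sum.cong[OF refl])
  fix k assume "k \<in> {..n div 2}"
  then have "k \<le> n div 2" by simp
  then have kn: "2 * k + (n - (2 * k + 1)) = n - 1" using assms(3) by presburger
  have E1: "(t + 1)^(n - 1) = (t+1)^(2*k) * (t+1)^(n - (2*k+1))" by (subst kn[symmetric], subst power_add) simp
  have E2: "u^k * (t+1)^(2*k) = 4^k * t^k"
  proof -
    have "u * (t+1)^2 = 4 * t" using assms by (simp add: field_simps)
    then have "(u * (t+1)^2)^k = (4 * t)^k" by simp
    then show ?thesis by (simp add: power_mult_distrib power_mult)
  qed
  have "(t + 1)^(n - 1) * (of_nat (n choose (2*k+1)) * u^k) = of_nat (n choose (2*k+1)) * (u^k * (t+1)^(2*k)) * (t+1)^(n-(2*k+1))"
    by (simp only: E1 mult_ac)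
  also have "\<dots> = of_nat (n choose (2*k+1)) * 4^k * t^k * (t+1)^(n-(2*k+1))" unfolding E2 by (simp only: mult.assoc)
  finally show "(t + 1)^(n - 1) * (of_nat (n choose (2*k+1)) * u^k) = of_nat (n choose (2*k+1)) * 4^k * t^k * (t+1)^(n-(2*k+1))" .
qed

lemma rev_even:
  assumes "u \<noteq> 0" "n = 2 * N"
  shows "u^N * (\<Sum>k\<le>N. of_nat (n choose (2*k)) * (1/u)^k) = (\<Sum>k\<le>N. of_nat (n choose (2*k)) * (u::rat)^k)"
proof -
  have "u^N * (\<Sum>k\<le>N. of_nat (n choose (2*k)) * (1/u)^k) = (\<Sum>k\<le>N. of_nat (n choose (2*k)) * u^(N-k))"
    unfolding sum_distrib_left
  proof (rule sum.cong[OF refl])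
    fix k assume "k \<in> {..N}"
    then have "u^N = u^k * u^(N-k)" by (simp add: power_add[symmetric])
    then show "u^N * (of_nat (n choose (2*k)) * (1/u)^k) = of_nat (n choose (2*k)) * u^(N-k)"
      using assms by (simp add: power_one_over field_simps)
  qed
  also have "\<dots> = (\<Sum>k\<le>N. of_nat (n choose (2*(N-k))) * u^(N-(N-k)))"
    using sum.atLeastAtMost_rev[of "\<lambda>k. of_nat (n choose (2*k)) * u^(N-k)" 0 N]
    by (simp add: atLeast0AtMost)
  also have "\<dots> = (\<Sum>k\<le>N. of_nat (n choose (2*k)) * u^k)"
  proof (rule sum.cong[OF refl])
    fix k assume "k \<in> {..N}"
    then have "n choose (2*(N-k)) = n choose (2*k)"
      using binomial_symmetric[of "2*k" n] assms by (simp add: right_diff_distrib')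
    then show "of_nat (n choose (2*(N-k))) * u^(N-(N-k)) = of_nat (n choose (2*k)) * u^k"
      using \<open>k \<in> {..N}\<close> by simp
  qed
  finally show ?thesis .
qed

lemma rev_odd:
  assumes "u \<noteq> 0" "n = 2 * N + 1"
  shows "u^N * (\<Sum>k\<le>N. of_nat (n choose (2*k)) * (1/u)^k) = (\<Sum>k\<le>N. of_nat (n choose (2*k+1)) * (u::rat)^k)"
proof -
  have "u^N * (\<Sum>k\<le>N. of_nat (n choose (2*k)) * (1/u)^k) = (\<Sum>k\<le>N. of_nat (n choose (2*k)) * u^(N-k))"
    unfolding sum_distrib_left
  proof (rule sum.cong[OF refl])
    fix k assume "k \<in> {..N}"
    then have "u^N = u^k * u^(N-k)" by (simp add: power_add[symmetric])
    then show "u^N * (of_nat (n choose (2*k)) * (1/u)^k) = of_nat (n choose (2*k)) * u^(N-k)"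
      using assms by (simp add: power_one_over field_simps)
  qed
  also have "\<dots> = (\<Sum>k\<le>N. of_nat (n choose (2*(N-k))) * u^(N-(N-k)))"
    using sum.atLeastAtMost_rev[of "\<lambda>k. of_nat (n choose (2*k)) * u^(N-k)" 0 N]
    by (simp add: atLeast0AtMost)
  also have "\<dots> = (\<Sum>k\<le>N. of_nat (n choose (2*k+1)) * u^k)"
  proof (rule sum.cong[OF refl])
    fix k assume "k \<in> {..N}"
    then have "n choose (2*(N-k)) = n choose (2*k+1)"
      using binomial_symmetric[of "2*(N-k)" n] assms by (simp add: right_diff_distrib')
    then show "of_nat (n choose (2*(N-k))) * u^(N-(N-k)) = of_nat (n choose (2*k+1)) * u^k"
      using \<open>k \<in> {..N}\<close> by simp
  qed
  finally show ?thesis .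
qed

locale thm_ctx =
  fixes p :: nat and a b :: rat
  assumes p: "prime p" and odd: "odd p" and a: "in_Zp p a" and b: "in_Zp p b"
    and nz: "\<not> qcong p (a * b * (a^2 - b^2)) 0"
begin

definition "n = (p - 1) div 2"
definition "t = (a + b) / (a - b)"

lemma pn: "p = 2 * n + 1" using odd n_def by presburger
lemma p2: "2 < p" using odd prime_gt_1_nat[OF p] by (cases "p = 2") auto
lemma pm1: "p - 1 = 2 * n" using pn by simp

lemmas zi = in_Zp_add[OF p] in_Zp_mult[OF p] in_Zp_diff[OF p] in_Zp_power[OF p] in_Zp_intI[OF p]
  in_Zp_natI[OF p] in_Zp_numeral[OF p] in_Zp_1[OF p] in_Zp_0[OF p] in_Zp_uminus[OF p]

lemma zA: "in_Zp p (a + b)" and zB: "in_Zp p (a - b)" using a b zi by auto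

lemma u_all: "zunit p (a * b * (a^2 - b^2))"
  unfolding zunit_def using nz a b zi by auto

lemma ua: "zunit p a" and ub: "zunit p b" and uA: "zunit p (a + b)" and uB: "zunit p (a - b)"
proof -
  have u1: "zunit p (a * b)" using zunit_factor[OF p _ _ u_all] a b zi by auto
  have u2: "zunit p (a^2 - b^2)" using zunit_factor[OF p _ _ u_all[unfolded mult.commute[of "a*b"]]] a b zi by auto
  show "zunit p a" using zunit_factor[OF p a b u1] .
  show "zunit p b" using zunit_factor[OF p b a] u1 by (simp add: mult.commute)
  have e: "a^2 - b^2 = (a + b) * (a - b)" by (simp add: power2_eq_square algebra_simps)
  show "zunit p (a + b)" using zunit_factor[OF p zA zB] u2 e by simp
  show "zunit p (a - b)" using zunit_factor[OF p zB zA] u2 e by (simp add: mult.commute)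
qed

lemma u2: "zunit p 2" using zunit_two[OF p odd] .

lemma a0: "a \<noteq> 0" using zunit_nonzero[OF p ua] .
lemma b0: "b \<noteq> 0" using zunit_nonzero[OF p ub] .
lemma B0: "a - b \<noteq> 0" using zunit_nonzero[OF p uB] .
lemma A0: "a + b \<noteq> 0" using zunit_nonzero[OF p uA] .

lemma zt: "in_Zp p t" unfolding t_def using in_Zp_divide[OF p zA uB] .
lemma tm1: "t - 1 = 2 * b / (a - b)" unfolding t_def using B0 by (simp add: field_simps)
lemma tp1: "t + 1 = 2 * a / (a - b)" unfolding t_def using B0 by (simp add: field_simps)
lemma utm1: "zunit p (t - 1)" unfolding tm1 by (intro zunit_divide[OF p] zunit_mult[OF p] u2 ub uB)
lemma utp1: "zunit p (t + 1)" unfolding tp1 by (intro zunit_divide[OF p] zunit_mult[OF p] u2 ua uB)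

lemma euler: "in_Zp p x \<Longrightarrow> qcong p (of_int (qLegendre x p)) (x ^ n)"
  using qcong_euler[OF p p2] n_def by simp

lemma fermat: "zunit p x \<Longrightarrow> qcong p (x ^ (2 * n)) 1"
  using qcong_fermat[OF p p2] pm1 by simp

end

context thm_ctx begin

lemma u16: "zunit p (16 * a^2)"
proof -
  have "zunit p (2^4 * a^2)" by (intro zunit_mult[OF p] zunit_power[OF p] u2 ua)
  then show ?thesis by simp
qed

lemma ut: "(a^2 - b^2) / a^2 = 4 * t / (t + 1)^2"
  unfolding tp1 t_def using a0 B0 by (simp add: field_simps power2_eq_square)

lemma zinv2b: "in_Zp p (1 / (2 * b))"
  using in_Zp_divide[OF p in_Zp_1[OF p] zunit_mult[OF p u2 ub]] .

lemma z2a: "in_Zp p (2*a)" using a zi by auto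

lemma zL: "in_Zp p (of_int (qLegendre x p))" using in_Zp_intI[OF p] .

lemma part1:
  "qcong p (\<Sum>k=0..p div 4. of_nat ((4*k) choose (2*k)) * ((a^2 - b^2) / (16 * a^2))^k)
     (1 / (2*b) * of_int (qLegendre (2*a) p) *
        ((a + b) * of_int (qLegendre (a + b) p) - (a - b) * of_int (qLegendre (a - b) p)))"
  (is "qcong p ?S ?R")
proof -
  define y where "y = (a^2 - b^2) / (16 * a^2)"
  define u where "u = (a^2 - b^2) / a^2"
  have zy: "in_Zp p y" unfolding y_def using in_Zp_divide[OF p _ u16] a b zi by auto
  have yu: "16 * y = u" unfolding y_def u_def using a0 by (simp add: field_simps)
  define f where "f = (\<Sum>k\<le>n div 2. of_nat (n choose (2*k)) * u^k)"
  have s1: "qcong p ?S f"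
    using binsum_cong[OF p odd zy] unfolding f_def y_def[symmetric] n_def[symmetric] yu .
  have cf: "(t + 1)^n * f = Pe n t"
    unfolding f_def by (rule f_Pe) (use zunit_nonzero[OF p utp1] ut u_def in auto)
  have e1: "qcong p ((t - 1) * Pe n t) (t^(n+1) - 1)"
    using even_id[OF p odd zt] n_def by simp
  define X where "X = 1/(2*b) * (2*a)^n * ((a+b)*(a+b)^n - (a-b)*(a-b)^n)"
  have zX: "in_Zp p X" unfolding X_def
    by (intro in_Zp_mult[OF p] in_Zp_diff[OF p] in_Zp_power[OF p] zinv2b zA zB z2a)
  have zR: "in_Zp p ?R"
    by (intro in_Zp_mult[OF p] in_Zp_diff[OF p] zinv2b zA zB zL)
  have r1: "qcong p ?R X"
  proof -
    have l1: "qcong p (of_int (qLegendre (2*a) p)) ((2*a)^n)" using euler[OF z2a] .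
    have l2: "qcong p (of_int (qLegendre (a+b) p)) ((a+b)^n)" using euler[OF zA] .
    have l3: "qcong p (of_int (qLegendre (a-b) p)) ((a-b)^n)" using euler[OF zB] .
    have d: "qcong p ((a + b) * of_int (qLegendre (a + b) p) - (a - b) * of_int (qLegendre (a - b) p))
                     ((a+b)*(a+b)^n - (a-b)*(a-b)^n)"
      by (intro qcong_diff[OF p] qcong_multL[OF p] l2 l3 zA zB) (use a b zi in auto)
    have m: "qcong p (1 / (2*b) * of_int (qLegendre (2*a) p)) (1 / (2*b) * (2*a)^n)"
      by (intro qcong_multL[OF p] l1 zinv2b) (use a zi in auto)
    have "qcong p ?R (1 / (2*b) * (2*a)^n * ((a+b)*(a+b)^n - (a-b)*(a-b)^n))"
      by (rule qcong_mult[OF p m d]; intro in_Zp_mult[OF p] in_Zp_diff[OF p] in_Zp_power[OF p] zinv2b zA zB zL)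
    then show ?thesis unfolding X_def .
  qed
  have r2: "(t - 1) * (t + 1)^n * X = (2*a)^(2*n) * (t^(n+1) - 1)"
  proof -
    have t1: "t^(n+1) = (a+b)*(a+b)^n / ((a-b)*(a-b)^n)" unfolding t_def by (simp add: power_divide power_add)
    have t2: "(2*a)^(2*n) = (2*a)^n * (2*a)^n" by (simp only: mult_2 power_add)
    have Q: "(a-b)^n \<noteq> 0" using B0 by simp
    have g: "(2*b/\<beta>) * (P/Q) * (1/(2*b) * P * (\<alpha>*R - \<beta>*Q)) = (P*P) * (\<alpha>*R/(\<beta>*Q) - 1)"
      if "\<beta> \<noteq> 0" "Q \<noteq> 0" for \<alpha> \<beta> P Q R :: rat
      using that b0 by (simp add: field_simps)
    show ?thesis unfolding t1 t2 tm1 tp1 X_def power_divide by (rule g[OF B0 Q])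
  qed
  have r3: "qcong p ((2*a)^(2*n) * (t^(n+1) - 1)) (1 * (t^(n+1) - 1))"
    by (rule qcong_mult[OF p fermat qcong_refl[OF p]]) (use zunit_mult[OF p u2 ua] zt a zi in auto)
  have zc: "in_Zp p ((t - 1) * (t + 1)^n)" using zt zi by auto
  have uc: "zunit p ((t - 1) * (t + 1)^n)" by (intro zunit_mult[OF p] zunit_power[OF p] utm1 utp1)
  have "qcong p ((t - 1) * (t + 1)^n * f) ((t - 1) * (t + 1)^n * ?R)"
  proof -
    have "(t - 1) * (t + 1)^n * f = (t - 1) * Pe n t" by (simp only: mult.assoc cf)
    then have "qcong p ((t - 1) * (t + 1)^n * f) (t^(n+1) - 1)" using e1 by (simp only:)
    moreover have "qcong p (t^(n+1) - 1) ((t - 1) * (t + 1)^n * X)"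
      using qcong_sym[OF p r3] r2 by simp
    moreover have "qcong p ((t - 1) * (t + 1)^n * X) ((t - 1) * (t + 1)^n * ?R)"
      by (rule qcong_multL[OF p zc qcong_sym[OF p r1] zR])
    ultimately show ?thesis using qcong_trans[OF p] by blast
  qed
  then have "qcong p f ?R" using qcong_cancel[OF p uc zR] by (simp add: mult.assoc)
  then show ?thesis using qcong_trans[OF p s1] by blast
qed

end

lemma E3gen:
  fixes X Y a b :: rat
  assumes "a \<noteq> 0" "b \<noteq> 0" "Y \<noteq> 0"
  shows "(2*b/Y) * (2*a/Y)^(2*N) * ((X*Y)/a^2)^N * (1/(2*b) * (X*Y^(2*N) - Y*X^(2*N)) * (-(X*Y))^N)
     = (-1)^N * 2^(2*N) * ((X/Y)^(2*N+1) * Y^(2*(2*N)) - X^(2*(2*N)))"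
proof -
  define xN yN aN tN where "xN = X^N" "yN = Y^N" "aN = a^N" "tN = (2::rat)^N"
  have p2: "\<And>z::rat. z^(2*N) = (z^N)^2" by (simp add: power_mult[symmetric] mult.commute)
  have p4: "\<And>z::rat. z^(2*(2*N)) = (z^N)^4" by (simp add: power_mult[symmetric] mult.commute)
  have r1: "(2*a/Y)^(2*N) = tN^2*aN^2/yN^2" unfolding p2 xN_yN_aN_tN_def by (simp add: power_divide power_mult_distrib)
  have a2: "(a^2)^N = aN^2" unfolding xN_yN_aN_tN_def by (simp add: power_mult[symmetric] mult.commute)
  have r2: "((X*Y)/a^2)^N = xN*yN/aN^2" unfolding xN_yN_aN_tN_def power_divide power_mult_distrib a2[unfolded xN_yN_aN_tN_def] ..
  have r3: "(-(X*Y))^N = (-1)^N*xN*yN"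
  proof -
    have "(-(X*Y))^N = ((-1)*X*Y)^N" by simp
    also have "\<dots> = (-1)^N*X^N*Y^N" by (simp only: power_mult_distrib)
    finally show ?thesis unfolding xN_yN_aN_tN_def .
  qed
  have r4: "(X/Y)^(2*N+1) = X*xN^2/(Y*yN^2)" unfolding xN_yN_aN_tN_def by (simp add: power_add p2 power_divide)
  have nz: "yN \<noteq> 0" "aN \<noteq> 0" using assms unfolding xN_yN_aN_tN_def by auto
  have r5: "Y^(2*N) = yN^2" "X^(2*N) = xN^2" "Y^(2*(2*N)) = yN^4" "X^(2*(2*N)) = xN^4" "(2::rat)^(2*N) = tN^2"
    unfolding xN_yN_aN_tN_def p2 p4 by simp_all
  show ?thesis unfolding r1 r2 r3 r4 r5 using assms nz by (simp add: field_simps power2_eq_square power4_eq_xxxx)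
qed

lemma E3odd:
  fixes X Y a b :: rat
  assumes "a \<noteq> 0" "b \<noteq> 0" "Y \<noteq> 0"
  shows "2 * (2*b/Y) * (2*a/Y)^(2*N) * ((X*Y)/a^2)^N * (1/(2*b) * (X^(2*N+1) - Y^(2*N+1)) * (-(X*Y))^(N+1))
     = (-1)^(N+1) * 2^(2*N+1) * (X^(2*(2*N+1)) - (X/Y)^(2*N+1) * Y^(2*(2*N+1)))"
proof -
  define xN yN aN tN where "xN = X^N" "yN = Y^N" "aN = a^N" "tN = (2::rat)^N"
  have p2: "\<And>z::rat. z^(2*N) = (z^N)^2" by (simp add: power_mult[symmetric] mult.commute)
  have p4: "\<And>z::rat. z^(2*(2*N+1)) = z^2 * (z^N)^4"
    by (simp add: power_mult[symmetric] power_add mult.commute power2_eq_square)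
  have r1: "(2*a/Y)^(2*N) = tN^2*aN^2/yN^2" unfolding p2 xN_yN_aN_tN_def by (simp add: power_divide power_mult_distrib)
  have a2: "(a^2)^N = aN^2" unfolding xN_yN_aN_tN_def by (simp add: power_mult[symmetric] mult.commute)
  have r2: "((X*Y)/a^2)^N = xN*yN/aN^2" unfolding xN_yN_aN_tN_def power_divide power_mult_distrib a2[unfolded xN_yN_aN_tN_def] ..
  have r3: "(-(X*Y))^(N+1) = (-1)^(N+1)*(X*xN)*(Y*yN)"
  proof -
    have "(-(X*Y))^(N+1) = ((-1)*X*Y)^(N+1)" by simp
    also have "\<dots> = (-1)^(N+1)*X^(N+1)*Y^(N+1)" by (simp only: power_mult_distrib)
    finally show ?thesis unfolding xN_yN_aN_tN_def by simp
  qed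
  have r4: "(X/Y)^(2*N+1) = X*xN^2/(Y*yN^2)" unfolding xN_yN_aN_tN_def by (simp add: power_add p2 power_divide)
  have r5: "X^(2*N+1) = X*xN^2" "Y^(2*N+1) = Y*yN^2" "X^(2*(2*N+1)) = X^2*xN^4" "Y^(2*(2*N+1)) = Y^2*yN^4"
     "(2::rat)^(2*N+1) = 2*tN^2"
    unfolding xN_yN_aN_tN_def p4 by (simp_all add: power_add p2)
  have nz: "yN \<noteq> 0" "aN \<noteq> 0" using assms unfolding xN_yN_aN_tN_def by auto
  show ?thesis unfolding r1 r2 r3 r4 r5 using assms nz by (simp add: field_simps power2_eq_square power4_eq_xxxx)
qed

context thm_ctx begin

lemma zunit_m2: "zunit p (-2)"
proof -
  have "zunit p ((-1) * 2)" by (intro zunit_mult[OF p] u2) (use zunit_intI[OF p, of "-1"] prime_gt_1_nat[OF p] in auto)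
  then show ?thesis by simp
qed

lemma sum_last:
  fixes g :: "nat \<Rightarrow> rat"
  assumes "\<And>k. k < N \<Longrightarrow> g k = 0"
  shows "(\<Sum>k\<le>N. g k) = g N"
proof -
  have "(\<Sum>k\<le>N. g k) = (\<Sum>k<Suc N. g k)" by (simp only: lessThan_Suc_atMost)
  also have "\<dots> = (\<Sum>k<N. g k) + g N" by simp
  also have "(\<Sum>k<N. g k) = 0" using assms by simp
  finally show ?thesis by simp
qed

lemma sv1:
  assumes nN: "n = 2 * N"
  shows "qcong p ((-1)^N * 2^n) 1"
proof -
  have z1: "in_Zp p (-1)" using zi by auto
  have e: "qcong p ((-1 - 1) * Pe n (-1)) ((-1)^(n+1) - 1)"
    using even_id[OF p odd z1] n_def by simp
  have pe: "Pe n (-1) = (-4)^N"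
  proof -
    have "Pe n (-1) = of_nat (n choose (2*N)) * 4^N * (-1)^N * (-1+1)^(n - 2*N)"
      unfolding Pe_def using nN by (subst sum_last) auto
    then show ?thesis using nN by (simp add: power_mult_distrib[symmetric])
  qed
  have "(-1::rat)^(n+1) - 1 = -2" using nN by simp
  then have "qcong p (-2 * (-4)^N) (-2 * 1)" using e pe by simp
  then have "qcong p ((-4)^N) 1" using qcong_cancel[OF p zunit_m2 in_Zp_1[OF p]] by simp
  moreover have "((-4::rat))^N = (-1)^N * 2^n"
    using nN by (simp add: power_mult power_mult_distrib[symmetric])
  ultimately show ?thesis by simp
qed

lemma sv2:
  assumes nN: "n = 2 * N + 1"
  shows "qcong p ((-1)^(N+1) * 2^n) 1"
proof -
  have z1: "in_Zp p (-1)" using zi by auto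
  have e: "qcong p (2 * (-1 - 1) * Po n (-1)) (1 - (-1)^n)"
    using odd_id[OF p odd z1] n_def by simp
  have po: "Po n (-1) = (-4)^N"
  proof -
    have "Po n (-1) = of_nat (n choose (2*N+1)) * 4^N * (-1)^N * (-1+1)^(n - (2*N+1))"
      unfolding Po_def using nN by (subst sum_last) auto
    then show ?thesis using nN by (simp add: power_mult_distrib[symmetric])
  qed
  have q1: "(1::rat) - (-1)^n = 2 * 1" using nN by simp
  have q2: "2 * (-1 - 1) * Po n (-1) = 2 * ((-1)^(N+1) * 2^n)"
    using po nN by (simp add: power_mult power_mult_distrib[symmetric] power_add)
  have "qcong p (2 * ((-1)^(N+1) * 2^n)) (2 * 1)" using e unfolding q1 q2 .
  then show ?thesis using qcong_cancel[OF p u2 in_Zp_1[OF p]] by simp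
qed

end

context thm_ctx begin

lemma u_eq: "(a^2 - b^2) / a^2 = ((a+b)*(a-b)) / a^2" by (simp add: power2_eq_square algebra_simps)
lemma bab: "b^2 - a^2 = -((a+b)*(a-b))" by (simp add: power2_eq_square algebra_simps)
lemma uab: "zunit p (a^2 - b^2)"
proof -
  have "zunit p ((a+b)*(a-b))" by (intro zunit_mult[OF p] uA uB)
  then show ?thesis by (simp add: power2_eq_square algebra_simps)
qed
lemma uu: "zunit p ((a^2 - b^2) / a^2)" by (intro zunit_divide[OF p] uab zunit_power[OF p] ua)
lemma u0: "(a^2 - b^2) / a^2 \<noteq> 0" using zunit_nonzero[OF p uu] .
lemma zy2: "in_Zp p (a^2 / (16 * (a^2 - b^2)))"
proof -
  have "zunit p (2^4 * (a^2 - b^2))" by (intro zunit_mult[OF p] zunit_power[OF p] u2 uab)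
  then show ?thesis using in_Zp_divide[OF p in_Zp_power[OF p a]] by simp
qed
lemma yu2: "16 * (a^2 / (16 * (a^2 - b^2))) = 1 / ((a^2 - b^2) / a^2)"
  using zunit_nonzero[OF p uab] a0 by (simp add: field_simps)

lemma part2e:
  assumes h: "4 dvd p - 1"
  shows "qcong p (\<Sum>k=0..p div 4. of_nat ((4*k) choose (2*k)) * (a^2 / (16 * (a^2 - b^2)))^k)
           (1 / (2*b) * ((a + b) * of_int (qLegendre (a - b) p) - (a - b) * of_int (qLegendre (a + b) p))
              * (b^2 - a^2) ^ ((p - 1) div 4))"
  (is "qcong p ?S ?R")
proof -
  have "even n" using h pm1 by presburger
  then obtain N where nN: "n = 2 * N" by blast
  have d4: "(p - 1) div 4 = N" using pm1 nN by simp
  have nd: "n div 2 = N" using nN by simp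
  define u where "u = (a^2 - b^2) / a^2"
  define g where "g = (\<Sum>k\<le>N. of_nat (n choose (2*k)) * (1/u)^k)"
  have s1: "qcong p ?S g"
    using binsum_cong[OF p odd zy2] unfolding n_def[symmetric] yu2 nd g_def u_def .
  define f where "f = (\<Sum>k\<le>N. of_nat (n choose (2*k)) * u^k)"
  have rv: "u^N * g = f" unfolding g_def f_def by (rule rev_even[OF _ nN]) (use u0 u_def in simp)
  have cf: "(t + 1)^n * f = Pe n t"
    unfolding f_def nd[symmetric] by (rule f_Pe) (use zunit_nonzero[OF p utp1] ut u_def in auto)
  have e1: "qcong p ((t - 1) * Pe n t) (t^(n+1) - 1)"
    using even_id[OF p odd zt] n_def by simp
  define c where "c = (2*b/(a-b)) * (2*a/(a-b))^n * u^N"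
  have cc: "c = (t - 1) * (t + 1)^n * u^N" unfolding c_def tm1 tp1 ..
  have cg: "c * g = (t - 1) * Pe n t"
  proof -
    have "c * g = (t - 1) * ((t + 1)^n * (u^N * g))" unfolding cc by (simp only: mult.assoc)
    then show ?thesis unfolding rv cf .
  qed
  have uc: "zunit p c" unfolding cc u_def by (intro zunit_mult[OF p] zunit_power[OF p] utm1 utp1 uu)
  have zc: "in_Zp p c" using uc zunit_def by blast
  define X2 where "X2 = 1/(2*b) * ((a+b)*(a-b)^n - (a-b)*(a+b)^n) * (b^2-a^2)^N"
  have zR: "in_Zp p ?R"
    by (intro in_Zp_mult[OF p] in_Zp_diff[OF p] in_Zp_power[OF p] zinv2b zA zB zL) (use a b zi in auto)
  have r1: "qcong p ?R X2"
  proof -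
    have l2: "qcong p (of_int (qLegendre (a+b) p)) ((a+b)^n)" using euler[OF zA] .
    have l3: "qcong p (of_int (qLegendre (a-b) p)) ((a-b)^n)" using euler[OF zB] .
    have d: "qcong p ((a + b) * of_int (qLegendre (a - b) p) - (a - b) * of_int (qLegendre (a + b) p))
                     ((a+b)*(a-b)^n - (a-b)*(a+b)^n)"
      by (intro qcong_diff[OF p] qcong_multL[OF p] l2 l3 zA zB) (use a b zi in auto)
    have m: "qcong p (1 / (2*b) * ((a + b) * of_int (qLegendre (a - b) p) - (a - b) * of_int (qLegendre (a + b) p)))
                     (1/(2*b) * ((a+b)*(a-b)^n - (a-b)*(a+b)^n))"
      by (intro qcong_multL[OF p] d zinv2b) (intro in_Zp_diff[OF p] in_Zp_mult[OF p] in_Zp_power[OF p] zA zB)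
    have w: "in_Zp p ((b^2-a^2)^N)" using a b zi by auto
    have "qcong p ?R (1/(2*b) * ((a+b)*(a-b)^n - (a-b)*(a+b)^n) * (b^2-a^2)^N)"
      unfolding d4 by (rule qcong_mult[OF p m qcong_refl[OF p]]; (intro in_Zp_mult[OF p] in_Zp_diff[OF p] zinv2b zA zB zL w)?)
    then show ?thesis unfolding X2_def .
  qed
  have r2: "c * X2 = (-1)^N * 2^n * (t^(n+1) * (a-b)^(2*n) - (a+b)^(2*n))"
  proof -
    have "c * X2 = (2*b/(a-b)) * (2*a/(a-b))^(2*N) * (((a+b)*(a-b))/a^2)^N *
          (1/(2*b) * ((a+b)*(a-b)^(2*N) - (a-b)*(a+b)^(2*N)) * (-((a+b)*(a-b)))^N)"
      unfolding c_def X2_def u_def u_eq bab nN ..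
    also have "\<dots> = (-1)^N * 2^(2*N) * (((a+b)/(a-b))^(2*N+1) * (a-b)^(2*(2*N)) - (a+b)^(2*(2*N)))"
      by (rule E3gen[OF a0 b0 B0])
    finally show ?thesis unfolding t_def nN .
  qed
  have r3: "qcong p ((-1)^N * 2^n * (t^(n+1) * (a-b)^(2*n) - (a+b)^(2*n))) ((-1)^N * 2^n * (t^(n+1) * 1 - 1))"
    by (intro qcong_multL[OF p] qcong_diff[OF p] fermat uA uB) (use zt zi in auto)
  have r4: "qcong p ((-1)^N * 2^n * (t^(n+1) * 1 - 1)) (1 * (t^(n+1) * 1 - 1))"
    by (rule qcong_mult[OF p sv1[OF nN] qcong_refl[OF p]]) (use zt zi in auto)
  have "qcong p (c * g) (c * ?R)"
  proof -
    have "qcong p (c * g) (t^(n+1) - 1)" unfolding cg by (rule e1)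
    moreover have "qcong p (t^(n+1) - 1) (c * X2)"
      using qcong_sym[OF p r3] qcong_sym[OF p r4] qcong_trans[OF p] r2 by simp
    moreover have "qcong p (c * X2) (c * ?R)" by (rule qcong_multL[OF p zc qcong_sym[OF p r1] zR])
    ultimately show ?thesis using qcong_trans[OF p] by blast
  qed
  then have "qcong p g ?R" using qcong_cancel[OF p uc zR] by blast
  then show ?thesis using qcong_trans[OF p s1] by blast
qed


lemma part2o:
  assumes h: "4 dvd p - 3"
  shows "qcong p (\<Sum>k=0..p div 4. of_nat ((4*k) choose (2*k)) * (a^2 / (16 * (a^2 - b^2)))^k)
           (1 / (2*b) * (of_int (qLegendre (a + b) p) - of_int (qLegendre (a - b) p))
              * (b^2 - a^2) ^ ((p + 1) div 4))"
  (is "qcong p ?S ?R")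
proof -
  have "odd n" using h pm1 pn p2 by presburger
  then obtain N where nN: "n = 2 * N + 1" using oddE by blast
  have d4: "(p + 1) div 4 = N + 1" using pn nN by simp
  have nd: "n div 2 = N" using nN by simp
  define u where "u = (a^2 - b^2) / a^2"
  define g where "g = (\<Sum>k\<le>N. of_nat (n choose (2*k)) * (1/u)^k)"
  have s1: "qcong p ?S g"
    using binsum_cong[OF p odd zy2] unfolding n_def[symmetric] yu2 nd g_def u_def .
  define f where "f = (\<Sum>k\<le>N. of_nat (n choose (2*k+1)) * u^k)"
  have rv: "u^N * g = f" unfolding g_def f_def by (rule rev_odd[OF _ nN]) (use u0 u_def in simp)
  have cf: "(t + 1)^(n - 1) * f = Po n t"
    unfolding f_def nd[symmetric] by (rule g_Po) (use zunit_nonzero[OF p utp1] ut u_def \<open>odd n\<close> in auto)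
  have e1: "qcong p (2 * (t - 1) * Po n t) (1 - t^n)"
    using odd_id[OF p odd zt] n_def by simp
  define c where "c = 2 * (2*b/(a-b)) * (2*a/(a-b))^(2*N) * u^N"
  have cc: "c = 2 * (t - 1) * (t + 1)^(n - 1) * u^N" unfolding c_def tm1 tp1 using nN by simp
  have cg: "c * g = 2 * (t - 1) * Po n t"
  proof -
    have "c * g = 2 * (t - 1) * ((t + 1)^(n - 1) * (u^N * g))" unfolding cc by (simp only: mult.assoc)
    then show ?thesis unfolding rv cf by (simp only: mult.assoc)
  qed
  have uc: "zunit p c" unfolding cc u_def by (intro zunit_mult[OF p] zunit_power[OF p] u2 utm1 utp1 uu)
  have zc: "in_Zp p c" using uc zunit_def by blast
  define X2 where "X2 = 1/(2*b) * ((a+b)^n - (a-b)^n) * (b^2-a^2)^(N+1)"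
  have zR: "in_Zp p ?R"
    by (intro in_Zp_mult[OF p] in_Zp_diff[OF p] in_Zp_power[OF p] zinv2b zA zB zL) (use a b zi in auto)
  have r1: "qcong p ?R X2"
  proof -
    have l2: "qcong p (of_int (qLegendre (a+b) p)) ((a+b)^n)" using euler[OF zA] .
    have l3: "qcong p (of_int (qLegendre (a-b) p)) ((a-b)^n)" using euler[OF zB] .
    have d: "qcong p (of_int (qLegendre (a + b) p) - of_int (qLegendre (a - b) p))
                     ((a+b)^n - (a-b)^n)"
      by (intro qcong_diff[OF p] l2 l3)
    have m: "qcong p (1 / (2*b) * (of_int (qLegendre (a + b) p) - of_int (qLegendre (a - b) p)))
                     (1/(2*b) * ((a+b)^n - (a-b)^n))"
      by (intro qcong_multL[OF p] d zinv2b) (intro in_Zp_diff[OF p] in_Zp_power[OF p] zA zB)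
    have w: "in_Zp p ((b^2-a^2)^(N+1))" using a b zi by auto
    have "qcong p ?R (1/(2*b) * ((a+b)^n - (a-b)^n) * (b^2-a^2)^(N+1))"
      unfolding d4 by (rule qcong_mult[OF p m qcong_refl[OF p]]; (intro in_Zp_mult[OF p] in_Zp_diff[OF p] zinv2b zA zB zL w)?)
    then show ?thesis unfolding X2_def .
  qed
  have r2: "c * X2 = (-1)^(N+1) * 2^n * ((a+b)^(2*n) - t^n * (a-b)^(2*n))"
  proof -
    have "c * X2 = 2 * (2*b/(a-b)) * (2*a/(a-b))^(2*N) * (((a+b)*(a-b))/a^2)^N *
          (1/(2*b) * ((a+b)^(2*N+1) - (a-b)^(2*N+1)) * (-((a+b)*(a-b)))^(N+1))"
      unfolding c_def X2_def u_def u_eq bab nN ..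
    also have "\<dots> = (-1)^(N+1) * 2^(2*N+1) * ((a+b)^(2*(2*N+1)) - ((a+b)/(a-b))^(2*N+1) * (a-b)^(2*(2*N+1)))"
      by (rule E3odd[OF a0 b0 B0])
    finally show ?thesis unfolding t_def nN .
  qed
  have r3: "qcong p ((-1)^(N+1) * 2^n * ((a+b)^(2*n) - t^n * (a-b)^(2*n))) ((-1)^(N+1) * 2^n * (1 - t^n * 1))"
    by (intro qcong_multL[OF p] qcong_diff[OF p] fermat uA uB) (use zt zi in auto)
  have r4: "qcong p ((-1)^(N+1) * 2^n * (1 - t^n * 1)) (1 * (1 - t^n * 1))"
    by (rule qcong_mult[OF p sv2[OF nN] qcong_refl[OF p]]) (use zt zi in auto)
  have "qcong p (c * g) (c * ?R)"
  proof -
    have "qcong p (c * g) (1 - t^n)" unfolding cg by (rule e1)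
    moreover have "qcong p (1 - t^n) (c * X2)"
      using qcong_sym[OF p r3] qcong_sym[OF p r4] qcong_trans[OF p] r2 by simp
    moreover have "qcong p (c * X2) (c * ?R)" by (rule qcong_multL[OF p zc qcong_sym[OF p r1] zR])
    ultimately show ?thesis using qcong_trans[OF p] by blast
  qed
  then have "qcong p g ?R" using qcong_cancel[OF p uc zR] by blast
  then show ?thesis using qcong_trans[OF p s1] by blast
qed

end

theorem theorem2p4:
  fixes p :: nat and a b :: rat
  assumes "prime p" and "odd p"
    and "in_Zp p a" and "in_Zp p b"
    and "\<not> qcong p (a * b * (a^2 - b^2)) 0"
  shows "qcong p
           (\<Sum>k=0..p div 4. of_nat ((4*k) choose (2*k)) * ((a^2 - b^2) / (16 * a^2))^k)
           (1 / (2*b) * of_int (qLegendre (2*a) p) *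
              ((a + b) * of_int (qLegendre (a + b) p) - (a - b) * of_int (qLegendre (a - b) p)))
       \<and> (4 dvd p - 1 \<longrightarrow> qcong p
           (\<Sum>k=0..p div 4. of_nat ((4*k) choose (2*k)) * (a^2 / (16 * (a^2 - b^2)))^k)
           (1 / (2*b) * ((a + b) * of_int (qLegendre (a - b) p) - (a - b) * of_int (qLegendre (a + b) p))
              * (b^2 - a^2) ^ ((p - 1) div 4)))
       \<and> (4 dvd p - 3 \<longrightarrow> qcong p
           (\<Sum>k=0..p div 4. of_nat ((4*k) choose (2*k)) * (a^2 / (16 * (a^2 - b^2)))^k)
           (1 / (2*b) * (of_int (qLegendre (a + b) p) - of_int (qLegendre (a - b) p))
              * (b^2 - a^2) ^ ((p + 1) div 4)))"
proof -
  interpret thm_ctx p a b using assms by unfold_locales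
  show ?thesis using part1 part2e part2o by blast
qed

end
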